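(* Let $a\in\mathbb{D}$ and $\mathcal{T}\in\{\mathbb{T},\{a\}\}$. For each pair of distinct points $x_1,x_2\in X_{\mathcal{T}}=\mathcal{T}\times\partial\widehat{H^\infty}\times\mathbb{T}$ there exists $\tilde f\in B_{\mathcal{T}}$ such that $\tilde f(x_1)\neq\tilde f(x_2)$.
   Context: $\mathbb{D}$ is the open unit disc and $\mathbb{T}$ the unit circle. $H^\infty$ is the Banach algebra of bounded analytic functions on $\mathbb{D}$ with the supremum norm, $\mathcal{M}$ its maximal ideal space with the Gelfand (weak* ) topology, $\hat v$ the Gelfand transform of $v\in H^\infty$, $\widehat{H^\infty}=\{\hat v: v\in H^\infty\}\subset C(\mathcal{M})$, and $\partial\widehat{H^\infty}$ its Shilov boundary. $\mathcal{S}^\infty=\{f\in H(\mathbb{D}): f'\in H^\infty\}$; every $f\in\mathcal{S}^\infty$ extends continuously to the closed disc $\overline{\mathbb{D}}$, and $\hat f$ denotes this extension. For $\mathcal{T}\in\{\mathbb{T},\{a\}\}$, $X_{\mathcal{T}}=\mathcal{T}\times\partial\widehat{H^\infty}\times\mathbb{T}$ with the product topology, and for $f\in\mathcal{S}^\infty$, $\tilde f(z,\eta,w)=\hat f(z)+\widehat{f'}(\eta)\,w$ for $(z,\eta,w)\in X_{\mathcal{T}}$. $B_{\mathcal{T}}=\{\tilde f: f\in\mathcal{S}^\infty\}\subset C(X_{\mathcal{T}})$. *)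

theory Defs
  imports "HOL-Analysis.Analysis"
begin

text \<open>Elements of H^infinity are represented canonically as functions that are
holomorphic and bounded on the open unit disc and vanish outside it.\<close>

definition restr_disc :: "(complex \<Rightarrow> complex) \<Rightarrow> complex \<Rightarrow> complex" where
  "restr_disc v = (\<lambda>z. if z \<in> ball 0 1 then v z else 0)"

definition Hinf :: "(complex \<Rightarrow> complex) set" where
  "Hinf = {v. v holomorphic_on ball 0 1 \<and> bounded (v ` ball 0 1) \<and> (\<forall>z. z \<notin> ball 0 1 \<longrightarrow> v z = 0)}"

definition one_Hinf :: "complex \<Rightarrow> complex" where
  "one_Hinf = restr_disc (\<lambda>_. 1)"

text \<open>Maximal ideal space: nonzero multiplicative linear functionals (characters) on H^infinity,
extended by 0 off Hinf so that they are canonical points of the function space.\<close>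

definition MIS :: "((complex \<Rightarrow> complex) \<Rightarrow> complex) set" where
  "MIS = {\<phi>. (\<forall>v\<in>Hinf. \<forall>w\<in>Hinf. \<phi> (\<lambda>z. v z + w z) = \<phi> v + \<phi> w)
           \<and> (\<forall>v\<in>Hinf. \<forall>c. \<phi> (\<lambda>z. c * v z) = c * \<phi> v)
           \<and> (\<forall>v\<in>Hinf. \<forall>w\<in>Hinf. \<phi> (\<lambda>z. v z * w z) = \<phi> v * \<phi> w)
           \<and> \<phi> one_Hinf = 1
           \<and> (\<forall>v. v \<notin> Hinf \<longrightarrow> \<phi> v = 0)}"

text \<open>Gelfand topology = weak* topology = topology of pointwise convergence, i.e. the
subspace topology of MIS in the product topology on functions.\<close>

definition gelfand_topology :: "((complex \<Rightarrow> complex) \<Rightarrow> complex) topology" where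
  "gelfand_topology = top_of_set MIS"

definition closed_boundary :: "((complex \<Rightarrow> complex) \<Rightarrow> complex) set \<Rightarrow> bool" where
  "closed_boundary E \<longleftrightarrow> E \<subseteq> MIS \<and> closedin gelfand_topology E \<and>
     (\<forall>v\<in>Hinf. \<forall>\<phi>\<in>MIS. \<exists>\<psi>\<in>E. norm (\<phi> v) \<le> norm (\<psi> v))"

definition shilov_boundary :: "((complex \<Rightarrow> complex) \<Rightarrow> complex) set" where
  "shilov_boundary = \<Inter> {E. closed_boundary E}"

definition S_inf :: "(complex \<Rightarrow> complex) set" where
  "S_inf = {f. f holomorphic_on ball 0 1 \<and> bounded (deriv f ` ball 0 1)}"

definition disc_ext :: "(complex \<Rightarrow> complex) \<Rightarrow> complex \<Rightarrow> complex" where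
  "disc_ext f z = (if z \<in> ball 0 1 then f z else Lim (at z within ball 0 1) f)"

definition X_space :: "complex set \<Rightarrow> (complex \<times> ((complex \<Rightarrow> complex) \<Rightarrow> complex) \<times> complex) set" where
  "X_space T = T \<times> shilov_boundary \<times> sphere 0 1"

definition tilde :: "(complex \<Rightarrow> complex) \<Rightarrow> complex \<times> ((complex \<Rightarrow> complex) \<Rightarrow> complex) \<times> complex \<Rightarrow> complex" where
  "tilde f x = (case x of (z, \<eta>, w) \<Rightarrow> disc_ext f z + \<eta> (restr_disc (deriv f)) * w)"

end

theory Submission
  imports Defs "HOL-Complex_Analysis.Complex_Analysis"
begin

lemma restr_poly_Hinf: "restr_disc (poly P) \<in> Hinf"
proof -
  have h: "restr_disc (poly P) holomorphic_on ball 0 1"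
    by (rule holomorphic_transform[of "poly P"]) (auto simp: restr_disc_def intro: holomorphic_intros)
  have "bounded (poly P ` cball 0 1)"
    by (intro compact_imp_bounded compact_continuous_image) (auto intro: continuous_intros)
  moreover have "restr_disc (poly P) ` ball 0 1 \<subseteq> poly P ` cball 0 1"
    by (auto simp: restr_disc_def)
  ultimately have "bounded (restr_disc (poly P) ` ball 0 1)" using bounded_subset by blast
  with h show ?thesis by (auto simp: Hinf_def restr_disc_def)
qed

lemma one_Hinf_in: "one_Hinf \<in> Hinf"
proof -
  have "poly [:1:] = (\<lambda>_::complex. 1::complex)" by (rule ext) simp
  then show ?thesis using restr_poly_Hinf[of "[:1:]"] by (simp add: one_Hinf_def)
qed

lemma MIS_poly:
  assumes "\<eta> \<in> MIS"
  shows "\<eta> (restr_disc (poly P)) = poly P (\<eta> (restr_disc (\<lambda>z. z)))"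
proof (induction P)
  case 0
  have e0: "restr_disc (poly 0) = (\<lambda>z. 0 * one_Hinf z)" by (rule ext) (simp add: restr_disc_def one_Hinf_def)
  have "\<eta> (\<lambda>z. 0 * one_Hinf z) = 0 * \<eta> one_Hinf" using assms one_Hinf_in unfolding MIS_def by blast
  then show ?case unfolding e0 by simp
next
  case (pCons c P)
  have oh: "one_Hinf \<in> Hinf" by (rule one_Hinf_in)
  have "restr_disc (\<lambda>z. z) = restr_disc (poly [:0,1:])" by (rule ext) (simp add: restr_disc_def)
  then have idh: "restr_disc (\<lambda>z. z) \<in> Hinf" using restr_poly_Hinf[of "[:0,1:]"] by metis
  have ph: "restr_disc (poly P) \<in> Hinf" by (rule restr_poly_Hinf)
  have e: "restr_disc (poly (pCons c P)) = (\<lambda>z. (\<lambda>z. c * one_Hinf z) z + (\<lambda>z. restr_disc (\<lambda>z. z) z * restr_disc (poly P) z) z)"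
    by (auto simp: restr_disc_def one_Hinf_def)
  have "(\<lambda>z. c * one_Hinf z) = restr_disc (poly [:c:])"
    by (rule ext) (simp add: one_Hinf_def restr_disc_def)
  then have ch: "(\<lambda>z. c * one_Hinf z) \<in> Hinf" using restr_poly_Hinf[of "[:c:]"] by metis
  have "(\<lambda>z. restr_disc (\<lambda>z. z) z * restr_disc (poly P) z) = restr_disc (poly ([:0,1:] * P))"
    by (rule ext) (simp add: restr_disc_def)
  then have mh: "(\<lambda>z. restr_disc (\<lambda>z. z) z * restr_disc (poly P) z) \<in> Hinf"
    using restr_poly_Hinf[of "[:0,1:] * P"] by metis
  show ?case using assms oh idh ph ch mh pCons unfolding e MIS_def by simp
qed

lemma dz: "poly (pderiv ([:-c,1:]*([:-c,1:]*R))) (c::complex) = 0"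
proof -
  have "poly [:-c,1:] c = 0" by simp
  then show ?thesis by (simp only: pderiv_mult poly_add poly_mult mult_zero_left mult_zero_right add_0)
qed

lemma deriv_poly: "deriv (poly Q) = poly (pderiv Q)"
  by (rule ext, rule DERIV_imp_deriv, rule poly_DERIV)

lemma S_inf_poly: "poly Q \<in> S_inf"
proof -
  have "bounded (poly (pderiv Q) ` cball 0 1)"
    by (intro compact_imp_bounded compact_continuous_image) (auto intro: continuous_intros)
  then have "bounded (poly (pderiv Q) ` ball 0 1)"
    by (rule bounded_subset) auto
  then show ?thesis by (auto simp: S_inf_def deriv_poly intro: holomorphic_intros)
qed

lemma disc_ext_poly:
  assumes "z \<in> cball 0 1"
  shows "disc_ext (poly Q) z = poly Q z"
proof (cases "z \<in> ball 0 1")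
  case True then show ?thesis by (simp add: disc_ext_def)
next
  case False
  have nt: "\<not> trivial_limit (at z within ball 0 1)"
    using assms by (simp add: trivial_limit_within islimpt_ball)
  have "(poly Q \<longlongrightarrow> poly Q z) (at z within ball 0 1)"
  proof -
    have "isCont (poly Q) z" by (rule poly_isCont)
    then have "(poly Q \<longlongrightarrow> poly Q z) (at z)" by (simp add: isCont_def)
    then show ?thesis by (rule tendsto_within_subset) simp
  qed
  then have "Lim (at z within ball 0 1) (poly Q) = poly Q z" by (rule tendsto_Lim[OF nt])
  with False show ?thesis by (simp add: disc_ext_def)
qed

lemma tilde_poly:
  assumes "z \<in> cball 0 1" "\<eta> \<in> MIS"
  shows "tilde (poly Q) (z, \<eta>, w) = poly Q z + poly (pderiv Q) (\<eta> (restr_disc (\<lambda>z. z))) * w"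
  using assms by (simp add: tilde_def disc_ext_poly deriv_poly MIS_poly)

lemma shilov_MIS: "shilov_boundary \<subseteq> MIS"
proof -
  have "closed_boundary MIS"
    unfolding closed_boundary_def gelfand_topology_def by auto
  then show ?thesis unfolding shilov_boundary_def by blast
qed

lemma antideriv:
  assumes "v \<in> Hinf"
  shows "\<exists>F\<in>S_inf. restr_disc (deriv F) = v"
proof -
  have hv: "v holomorphic_on ball 0 1" using assms by (simp add: Hinf_def)
  obtain g where g: "\<And>x. x \<in> ball 0 1 \<Longrightarrow> (g has_field_derivative v x) (at x within ball 0 1)"
    using holomorphic_convex_primitive'[OF convex_ball open_ball hv] by blast
  have g': "(g has_field_derivative v x) (at x)" if "x \<in> ball 0 1" for x
  proof -
    have "at x within ball 0 1 = at x" by (rule at_within_open[OF that open_ball])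
    then show ?thesis using g[OF that] by metis
  qed
  have dg: "\<And>x. x \<in> ball 0 1 \<Longrightarrow> deriv g x = v x" using g' DERIV_imp_deriv by blast
  have "g holomorphic_on ball 0 1"
    using g' holomorphic_on_open open_ball by blast
  moreover have "deriv g ` ball 0 1 = v ` ball 0 1" using dg by auto
  moreover have "bounded (v ` ball 0 1)" using assms by (simp add: Hinf_def)
  ultimately have "g \<in> S_inf" by (simp add: S_inf_def)
  moreover have "restr_disc (deriv g) = v"
    using dg assms by (auto simp: restr_disc_def Hinf_def)
  ultimately show ?thesis by blast
qed

theorem proposition2p1:
  fixes a :: complex and T :: "complex set"
  assumes "a \<in> ball 0 1"
    and "T \<in> {sphere 0 1, {a}}"
  shows "\<forall>x1\<in>X_space T. \<forall>x2\<in>X_space T. x1 \<noteq> x2 \<longrightarrow>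
           (\<exists>f\<in>S_inf. tilde f x1 \<noteq> tilde f x2)"
proof (intro ballI impI)
  fix x1 x2 assume x1: "x1 \<in> X_space T" and x2: "x2 \<in> X_space T" and ne: "x1 \<noteq> x2"
  show "\<exists>f\<in>S_inf. tilde f x1 \<noteq> tilde f x2"
  proof (rule ccontr)
    assume "\<not> ?thesis"
    then have H: "\<And>f. f \<in> S_inf \<Longrightarrow> tilde f x1 = tilde f x2" by blast
    obtain z1 e1 w1 where x1e: "x1 = (z1, e1, w1)" by (cases x1) auto
    obtain z2 e2 w2 where x2e: "x2 = (z2, e2, w2)" by (cases x2) auto
    have Tc: "T \<subseteq> cball 0 1" using assms by auto
    have z1: "z1 \<in> cball 0 1" and e1: "e1 \<in> MIS" and w1: "norm w1 = 1"
      using x1 x1e Tc shilov_MIS by (auto simp: X_space_def)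
    have z2: "z2 \<in> cball 0 1" and e2: "e2 \<in> MIS" and w2: "norm w2 = 1"
      using x2 x2e Tc shilov_MIS by (auto simp: X_space_def)
    have w1n: "w1 \<noteq> 0" and w2n: "w2 \<noteq> 0" using w1 w2 by auto
    define p where "p = e1 (restr_disc (\<lambda>z. z))"
    define q where "q = e2 (restr_disc (\<lambda>z. z))"
    have P: "poly Q z1 + poly (pderiv Q) p * w1 = poly Q z2 + poly (pderiv Q) q * w2" for Q
      using H[OF S_inf_poly[of Q]] tilde_poly[OF z1 e1, of Q w1] tilde_poly[OF z2 e2, of Q w2]
      unfolding x1e x2e p_def q_def by simp
    show False
    proof (cases "z1 = z2")
      case True
      have ww: "w1 = w2" using P[of "[:0,1:]"] True by (simp add: pderiv_pCons)
      have "e1 v = e2 v" for v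
      proof (cases "v \<in> Hinf")
        case True
        obtain F where F: "F \<in> S_inf" "restr_disc (deriv F) = v" using antideriv[OF True] by blast
        show ?thesis using H[OF F(1)] F(2) \<open>z1 = z2\<close> ww w2n unfolding x1e x2e tilde_def by simp
      next
        case False then show ?thesis using e1 e2 by (simp add: MIS_def)
      qed
      then have "e1 = e2" by (rule ext)
      then show False using ne x1e x2e True ww by simp
    next
      case False
      have u: "z1 - z2 \<noteq> 0" using False by simp
      show False
      proof (cases "z1 \<noteq> p \<and> z1 \<noteq> q")
        case True
        let ?Q = "[:-z2,1:] * [:-p,1:]^2 * [:-q,1:]^2"
        have "?Q = [:-p,1:]*([:-p,1:]*([:-z2,1:] * [:-q,1:]^2))" by (simp only: power2_eq_square ac_simps)
        then have d1: "poly (pderiv ?Q) p = 0" using dz by metis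
        have "?Q = [:-q,1:]*([:-q,1:]*([:-z2,1:] * [:-p,1:]^2))" by (simp only: power2_eq_square ac_simps)
        then have d2: "poly (pderiv ?Q) q = 0" using dz by metis
        have "poly ?Q z1 = poly ?Q z2" using P[of ?Q] d1 d2 by simp
        then show False using True u by simp
      next
        case c1: False
        show False
        proof (cases "z2 \<noteq> p \<and> z2 \<noteq> q")
          case True
          let ?Q = "[:-z1,1:] * [:-p,1:]^2 * [:-q,1:]^2"
          have "?Q = [:-p,1:]*([:-p,1:]*([:-z1,1:] * [:-q,1:]^2))" by (simp only: power2_eq_square ac_simps)
          then have d1: "poly (pderiv ?Q) p = 0" using dz by metis
          have "?Q = [:-q,1:]*([:-q,1:]*([:-z1,1:] * [:-p,1:]^2))" by (simp only: power2_eq_square ac_simps)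
          then have d2: "poly (pderiv ?Q) q = 0" using dz by metis
          have "poly ?Q z1 = poly ?Q z2" using P[of ?Q] d1 d2 by simp
          then show False using True u by simp
        next
          case c2: False
          let ?Q = "[:-z1,1:]^2 * [:-z2,1:]"
          have "?Q = [:-z1,1:]*([:-z1,1:]*[:-z2,1:])" by (simp only: power2_eq_square ac_simps)
          then have a1: "poly (pderiv ?Q) z1 = 0" using dz by metis
          have a2: "poly (pderiv ?Q) z2 = (z2 - z1)^2"
            by (simp add: pderiv_mult power2_eq_square pderiv_pCons) (simp add: algebra_simps)
          have u2: "(z2 - z1)^2 \<noteq> 0" using u by simp
          have "(p = z1 \<and> q = z2) \<or> (p = z2 \<and> q = z1)" using c1 c2 False by auto
          then show False
          proof
            assume "p = z1 \<and> q = z2"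
            then show False using P[of ?Q] a1 a2 u2 w2n by simp
          next
            assume "p = z2 \<and> q = z1"
            then show False using P[of ?Q] a1 a2 u2 w1n by simp
          qed
        qed
      qed
    qed
  qed
qed

end
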